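(* Let $F$ be a finite forest each of whose connected components is a caterpillar with at least one edge. Then $F$ is odd-graceful.
   Context: A caterpillar is a tree with the property that removing all of its end vertices (leaves) leaves a path. A graph $G$ with $n$ edges is odd-graceful if there is an injective map $f:V(G)\to\{0,1,2,\dots,2n-1\}$ such that the set of induced edge weights $\{|f(x)-f(y)| : xy\in E(G)\}$ equals $\{1,3,5,\dots,2n-1\}$. *)

theory Defs
  imports Main
begin

definition simple_graph :: "'a set \<Rightarrow> 'a set set \<Rightarrow> bool" where
  "simple_graph V E \<longleftrightarrow> finite V \<and> (\<forall>e\<in>E. e \<subseteq> V \<and> card e = 2)"

definition adj :: "'a set set \<Rightarrow> 'a \<Rightarrow> 'a \<Rightarrow> bool" where
  "adj E x y \<longleftrightarrow> {x, y} \<in> E"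

definition degree :: "'a set set \<Rightarrow> 'a \<Rightarrow> nat" where
  "degree E v = card {e\<in>E. v \<in> e}"

definition reachable :: "'a set set \<Rightarrow> 'a \<Rightarrow> 'a \<Rightarrow> bool" where
  "reachable E x y \<longleftrightarrow> (x, y) \<in> {(u, v). adj E u v}\<^sup>*"

definition connected_graph :: "'a set \<Rightarrow> 'a set set \<Rightarrow> bool" where
  "connected_graph V E \<longleftrightarrow> (\<forall>x\<in>V. \<forall>y\<in>V. reachable E x y)"

definition has_cycle :: "'a set set \<Rightarrow> bool" where
  "has_cycle E \<longleftrightarrow> (\<exists>xs. length xs \<ge> 3 \<and> distinct xs \<and>
      (\<forall>i. Suc i < length xs \<longrightarrow> adj E (xs ! i) (xs ! Suc i)) \<and> adj E (last xs) (hd xs))"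

definition forest :: "'a set \<Rightarrow> 'a set set \<Rightarrow> bool" where
  "forest V E \<longleftrightarrow> simple_graph V E \<and> \<not> has_cycle E"

definition tree :: "'a set \<Rightarrow> 'a set set \<Rightarrow> bool" where
  "tree V E \<longleftrightarrow> forest V E \<and> connected_graph V E \<and> V \<noteq> {}"

text \<open>A path graph (the empty graph counts as a path with no vertices).\<close>
definition path_graph :: "'a set \<Rightarrow> 'a set set \<Rightarrow> bool" where
  "path_graph V E \<longleftrightarrow> (\<exists>xs. distinct xs \<and> set xs = V \<and>
      E = {{xs ! i, xs ! Suc i} | i. Suc i < length xs})"

definition remove_leaves :: "'a set \<Rightarrow> 'a set set \<Rightarrow> 'a set \<times> 'a set set" where
  "remove_leaves V E = (let V' = {v\<in>V. degree E v \<noteq> 1} in (V', {e\<in>E. e \<subseteq> V'}))"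

definition caterpillar :: "'a set \<Rightarrow> 'a set set \<Rightarrow> bool" where
  "caterpillar V E \<longleftrightarrow> tree V E \<and> (case remove_leaves V E of (V', E') \<Rightarrow> path_graph V' E')"

definition component :: "'a set \<Rightarrow> 'a set set \<Rightarrow> 'a \<Rightarrow> 'a set" where
  "component V E v = {u\<in>V. reachable E v u}"

definition induced_edges :: "'a set set \<Rightarrow> 'a set \<Rightarrow> 'a set set" where
  "induced_edges E C = {e\<in>E. e \<subseteq> C}"

definition odd_graceful :: "'a set \<Rightarrow> 'a set set \<Rightarrow> bool" where
  "odd_graceful V E \<longleftrightarrow> (\<exists>f :: 'a \<Rightarrow> nat.
      inj_on f V \<and> f ` V \<subseteq> {0..<2 * card E} \<and>
      {w. \<exists>x y. {x, y} \<in> E \<and> w = nat \<bar>int (f x) - int (f y)\<bar>}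
        = {k. odd k \<and> k < 2 * card E})"

end

theory Submission
  imports Defs
begin


definition weights :: "('a \<Rightarrow> nat) \<Rightarrow> 'a set set \<Rightarrow> nat set" where
  "weights f E = {w. \<exists>x y. {x, y} \<in> E \<and> w = nat \<bar>int (f x) - int (f y)\<bar>}"

definition cross :: "'a set \<Rightarrow> 'a set set \<Rightarrow> ('a \<Rightarrow> nat) \<Rightarrow> nat \<Rightarrow> bool" where
  "cross V E f l \<longleftrightarrow> (\<forall>e\<in>E. \<exists>x y. e = {x,y} \<and> x \<in> V \<and> y \<in> V \<and> f x \<le> l \<and> l < f y)"

definition Pstair :: "'a set \<Rightarrow> 'a set set \<Rightarrow> 'a \<Rightarrow> 'a \<Rightarrow> bool" where
  "Pstair V E a b \<longleftrightarrow> (\<exists>f l. inj_on f V \<and> (\<forall>v\<in>V. f v < 2 * card E) \<and> cross V E f l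
     \<and> weights f E = {k. odd k \<and> k < 2 * card E} \<and> f a = l \<and> f b = Suc l \<and> a \<in> V \<and> b \<in> V
     \<and> finite E)"

lemma odds_step: "insert 1 ((\<lambda>w. w + 2) ` {k::nat. odd k \<and> k < 2 * n}) = {k. odd k \<and> k < 2 * Suc n}"
proof (intro set_eqI iffI)
  fix k assume k: "k \<in> {k. odd k \<and> k < 2 * Suc n}"
  show "k \<in> insert 1 ((\<lambda>w. w + 2) ` {k::nat. odd k \<and> k < 2 * n})"
  proof (cases "k = 1")
    case False
    then have "k - 2 \<in> {k::nat. odd k \<and> k < 2 * n}" "k = k - 2 + 2" using k by (auto elim!: oddE)
    then show ?thesis by blast
  qed simp
qed auto

lemma weights_union: "weights f (A \<union> B) = weights f A \<union> weights f B"
  unfolding weights_def by auto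

lemma weights_insert: "weights f (insert e B) = weights f {e} \<union> weights f B"
  using weights_union[of f "{e}" B] by simp

lemma weights_single: "weights f {{a,b}} = {nat \<bar>int (f a) - int (f b)\<bar>}"
  unfolding weights_def by (auto simp: doubleton_eq_iff)

lemma weights_cong: "(\<And>e. e \<in> E \<Longrightarrow> e \<subseteq> V) \<Longrightarrow> (\<And>v. v \<in> V \<Longrightarrow> g v = h v) \<Longrightarrow> weights g E = weights h E"
  unfolding weights_def by (intro Collect_cong) (metis insert_subset)

lemma weights_plus: "weights (\<lambda>v. g v + s) E = weights g E"
  unfolding weights_def by simp

lemma pair_shift:
  assumes "{x,y} = {x',y'}" "f x' \<le> l" "l < f y'" "g x' = f x'" "g y' = f y' + c"
  shows "nat \<bar>int (g x) - int (g y)\<bar> = nat \<bar>int (f x) - int (f y)\<bar> + c"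
proof -
  have "(x = x' \<and> y = y') \<or> (x = y' \<and> y = x')" using assms(1) by (simp add: doubleton_eq_iff)
  then show ?thesis
  proof
    assume "x = x' \<and> y = y'"
    then show ?thesis using assms(2-5) by (simp add: nat_abs_int_diff)
  next
    assume "x = y' \<and> y = x'"
    then show ?thesis using assms(2-5) by (simp add: nat_abs_int_diff)
  qed
qed

lemma weights_shift:
  assumes "cross V E f l" "\<And>v. v \<in> V \<Longrightarrow> f v \<le> l \<Longrightarrow> g v = f v"
    "\<And>v. v \<in> V \<Longrightarrow> l < f v \<Longrightarrow> g v = f v + c"
  shows "weights g E = (\<lambda>w. w + c) ` weights f E"
proof -
  have key: "nat \<bar>int (g x) - int (g y)\<bar> = nat \<bar>int (f x) - int (f y)\<bar> + c" if "{x,y} \<in> E" for x y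
  proof -
    have ex: "\<exists>x' y'. {x,y} = {x',y'} \<and> x' \<in> V \<and> y' \<in> V \<and> f x' \<le> l \<and> l < f y'"
      using assms(1) that unfolding cross_def by (rule bspec)
    obtain x' y' where o: "{x,y} = {x',y'}" "x' \<in> V" "y' \<in> V" "f x' \<le> l" "l < f y'"
      using ex by metis
    moreover have "g x' = f x'" using assms(2) \<open>x' \<in> V\<close> \<open>f x' \<le> l\<close> by blast
    moreover have "g y' = f y' + c" using assms(3) \<open>y' \<in> V\<close> \<open>l < f y'\<close> by blast
    ultimately show ?thesis using pair_shift[OF o(1) o(4) o(5)] by blast
  qed
  show ?thesis
  proof (intro set_eqI iffI)
    fix w assume "w \<in> weights g E"
    then obtain x y where xy: "{x,y} \<in> E" "w = nat \<bar>int (g x) - int (g y)\<bar>" unfolding weights_def by blast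
    then have "nat \<bar>int (f x) - int (f y)\<bar> \<in> weights f E" "w = nat \<bar>int (f x) - int (f y)\<bar> + c"
      using key[OF xy(1)] unfolding weights_def by auto
    then show "w \<in> (\<lambda>w. w + c) ` weights f E" by blast
  next
    fix w assume "w \<in> (\<lambda>w. w + c) ` weights f E"
    then obtain x y where xy: "{x,y} \<in> E" "w = nat \<bar>int (f x) - int (f y)\<bar> + c" unfolding weights_def by blast
    then have "w = nat \<bar>int (g x) - int (g y)\<bar>" using key[OF xy(1)] by simp
    then show "w \<in> weights g E" using xy(1) unfolding weights_def by blast
  qed
qed

lemma cross_sub: "cross V E f l \<Longrightarrow> e \<in> E \<Longrightarrow> e \<subseteq> V"
proof -
  assume "cross V E f l" "e \<in> E"
  then obtain x y where "e = {x,y}" "x \<in> V" "y \<in> V" unfolding cross_def by metis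
  then show "e \<subseteq> V" by simp
qed

lemma step_high:
  assumes P: "Pstair V E a b" and x: "x \<notin> V"
  shows "Pstair (insert x V) (insert {a,x} E) a x"
proof -
  obtain f l where inj: "inj_on f V" and rng: "\<forall>v\<in>V. f v < 2 * card E" and cr: "cross V E f l"
    and w: "weights f E = {k. odd k \<and> k < 2 * card E}" and fa: "f a = l" and fb: "f b = Suc l"
    and aV: "a \<in> V" and bV: "b \<in> V" and fin: "finite E"
    using P unfolding Pstair_def by blast
  define g where "g v = (if v = x then Suc l else if f v \<le> l then f v else f v + 2)" for v
  have nE: "{a,x} \<notin> E" using cross_sub[OF cr] x by blast
  have cardE: "card (insert {a,x} E) = Suc (card E)" using nE fin by simp
  have lt: "l < 2 * card E" using rng bV fb by force
  have "inj_on g (insert x V)"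
  proof (rule inj_onI)
    fix u v assume "u \<in> insert x V" "v \<in> insert x V" "g u = g v"
    then show "u = v" using inj x unfolding g_def inj_on_def
      by (auto split: if_splits)
  qed
  moreover have "\<forall>v\<in>insert x V. g v < 2 * card (insert {a,x} E)"
    using rng lt unfolding cardE g_def by auto
  moreover have "cross (insert x V) (insert {a,x} E) g l"
    unfolding cross_def
  proof
    fix e assume "e \<in> insert {a,x} E"
    then show "\<exists>u v. e = {u,v} \<and> u \<in> insert x V \<and> v \<in> insert x V \<and> g u \<le> l \<and> l < g v"
    proof
      assume "e = {a,x}" then show ?thesis using aV x fa unfolding g_def by (intro exI[of _ a] exI[of _ x]) auto
    next
      assume "e \<in> E"
      then obtain u v where "e = {u,v}" "u \<in> V" "v \<in> V" "f u \<le> l" "l < f v" using cr unfolding cross_def by blast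
      then show ?thesis using x unfolding g_def by (intro exI[of _ u] exI[of _ v]) auto
    qed
  qed
  moreover have "weights g (insert {a,x} E) = {k. odd k \<and> k < 2 * card (insert {a,x} E)}"
  proof -
    have "weights g E = (\<lambda>w. w + 2) ` weights f E"
      by (rule weights_shift[OF cr]) (use x in \<open>auto simp: g_def\<close>)
    moreover have "weights g {{a,x}} = {1}" unfolding weights_single using aV x fa by (auto simp: g_def)
    ultimately show ?thesis using odds_step[of "card E"] w unfolding cardE
      by (subst weights_insert) simp
  qed
  moreover have "g a = l" "g x = Suc l" using aV x fa by (auto simp: g_def)
  ultimately show ?thesis unfolding Pstair_def using aV fin by blast
qed

lemma step_low:
  assumes P: "Pstair V E a b" and x: "x \<notin> V"
  shows "Pstair (insert x V) (insert {x,b} E) x b"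
proof -
  obtain f l where inj: "inj_on f V" and rng: "\<forall>v\<in>V. f v < 2 * card E" and cr: "cross V E f l"
    and w: "weights f E = {k. odd k \<and> k < 2 * card E}" and fa: "f a = l" and fb: "f b = Suc l"
    and aV: "a \<in> V" and bV: "b \<in> V" and fin: "finite E"
    using P unfolding Pstair_def by blast
  define g where "g v = (if v = x then l + 2 else if f v \<le> l then f v else f v + 2)" for v
  have nE: "{x,b} \<notin> E" using cross_sub[OF cr] x by blast
  have cardE: "card (insert {x,b} E) = Suc (card E)" using nE fin by simp
  have lt: "l < 2 * card E" using rng bV fb by force
  have "inj_on g (insert x V)"
  proof (rule inj_onI)
    fix u v assume "u \<in> insert x V" "v \<in> insert x V" "g u = g v"
    then show "u = v" using inj x unfolding g_def inj_on_def
      by (auto split: if_splits)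
  qed
  moreover have "\<forall>v\<in>insert x V. g v < 2 * card (insert {x,b} E)"
    using rng lt unfolding cardE g_def by auto
  moreover have "cross (insert x V) (insert {x,b} E) g (l+2)"
    unfolding cross_def
  proof
    fix e assume "e \<in> insert {x,b} E"
    then show "\<exists>u v. e = {u,v} \<and> u \<in> insert x V \<and> v \<in> insert x V \<and> g u \<le> l+2 \<and> l+2 < g v"
    proof
      assume "e = {x,b}" then show ?thesis using bV x fb unfolding g_def by (intro exI[of _ x] exI[of _ b]) auto
    next
      assume "e \<in> E"
      then obtain u v where "e = {u,v}" "u \<in> V" "v \<in> V" "f u \<le> l" "l < f v" using cr unfolding cross_def by blast
      then show ?thesis using x unfolding g_def by (intro exI[of _ u] exI[of _ v]) auto
    qed
  qed
  moreover have "weights g (insert {x,b} E) = {k. odd k \<and> k < 2 * card (insert {x,b} E)}"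
  proof -
    have "weights g E = (\<lambda>w. w + 2) ` weights f E"
      by (rule weights_shift[OF cr]) (use x in \<open>auto simp: g_def\<close>)
    moreover have "weights g {{x,b}} = {1}" unfolding weights_single using bV x fb by (auto simp: g_def)
    ultimately show ?thesis using odds_step[of "card E"] w unfolding cardE
      by (subst weights_insert) simp
  qed
  moreover have "g x = l + 2" "g b = Suc (l + 2)" using bV x fb by (auto simp: g_def)
  ultimately show ?thesis unfolding Pstair_def using bV fin by blast
qed

definition Good :: "'a set \<Rightarrow> 'a set set \<Rightarrow> 'a \<Rightarrow> bool" where
  "Good V E c \<longleftrightarrow> (V = {c} \<and> E = {}) \<or> (\<exists>w. Pstair V E c w \<or> Pstair V E w c)"

lemma Good_step:
  assumes "Good V E c" "x \<notin> V"
  shows "Good (insert x V) (insert {c,x} E) c \<and> Good (insert x V) (insert {c,x} E) x"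
proof -
  consider (e) "V = {c}" "E = {}" | (h) w where "Pstair V E c w" | (l) w where "Pstair V E w c"
    using assms(1) unfolding Good_def by blast
  then show ?thesis
  proof cases
  case e
  note V = e(1) and E = e(2)
  have cx: "c \<noteq> x" using assms(2) V by auto
  have "Pstair (insert x V) (insert {c,x} E) c x"
    unfolding Pstair_def V E
  proof (intro exI[of _ "\<lambda>v. if v = c then 0 else 1"] exI[of _ 0] conjI)
    show "cross (insert x {c}) {{c, x}} (\<lambda>v. if v = c then 0 else 1) 0"
      unfolding cross_def using cx by (auto intro!: exI[of _ c] exI[of _ x])
    show "weights (\<lambda>v. if v = c then 0 else 1) {{c, x}} = {k. odd k \<and> k < 2 * card {{c, x}}}"
      unfolding weights_single using cx by (auto elim!: oddE)
  qed (use cx in \<open>auto simp: inj_on_def\<close>)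
  then show ?thesis unfolding Good_def by blast
next
  case (h w)
  from step_high[OF this assms(2)] show ?thesis unfolding Good_def by blast
next
  case (l w)
  from step_low[OF this assms(2)] show ?thesis unfolding Good_def by (auto simp: insert_commute)
  qed
qed

lemma Good_leaves:
  assumes "finite L" "Good V E c" "L \<inter> V = {}" "c \<in> V"
  shows "Good (V \<union> L) (E \<union> (\<lambda>l. {c,l}) ` L) c"
  using assms
proof (induction L rule: finite_induct)
  case empty then show ?case by simp
next
  case (insert x F)
  have "F \<inter> V = {}" using insert.prems(2) by blast
  then have "Good (V \<union> F) (E \<union> (\<lambda>l. {c,l}) ` F) c" using insert.IH insert.prems(1,3) by blast
  moreover have "x \<notin> V \<union> F" using insert.hyps(2) insert.prems(2) by blast
  ultimately have "Good (insert x (V \<union> F)) (insert {c,x} (E \<union> (\<lambda>l. {c,l}) ` F)) c"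
    by (rule conjunct1[OF Good_step])
  moreover have "insert x (V \<union> F) = V \<union> insert x F" by (simp only: Un_insert_right)
  moreover have "insert {c,x} (E \<union> (\<lambda>l. {c,l}) ` F) = E \<union> (\<lambda>l. {c,l}) ` (insert x F)"
    by (simp only: image_insert Un_insert_right)
  ultimately show ?case by metis
qed

lemma Good_V: "Good V E c \<Longrightarrow> c \<in> V"
  unfolding Good_def Pstair_def by auto

definition path_edges :: "'a list \<Rightarrow> 'a set set" where
  "path_edges xs = (\<lambda>i. {xs ! i, xs ! Suc i}) ` {i. Suc i < length xs}"

lemma path_edges_alt: "path_edges xs = {{xs ! i, xs ! Suc i} | i. Suc i < length xs}"
  unfolding path_edges_def by (rule setcompr_eq_image[symmetric])

lemma path_edges_Cons2: "path_edges (c # y # ys) = insert {c,y} (path_edges (y # ys))"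
proof -
  have I: "{i. Suc i < length (c # y # ys)} = insert 0 (Suc ` {i. Suc i < length (y # ys)})"
  proof (rule set_eqI)
    fix i show "i \<in> {i. Suc i < length (c # y # ys)} \<longleftrightarrow> i \<in> insert 0 (Suc ` {i. Suc i < length (y # ys)})"
      by (cases i) auto
  qed
  show ?thesis unfolding path_edges_def I image_insert image_image by simp
qed

lemma path_edges_single: "path_edges [c] = {}" unfolding path_edges_def by simp

definition leaf_edges :: "'a set \<Rightarrow> ('a \<Rightarrow> 'a set) \<Rightarrow> 'a set set" where
  "leaf_edges S L = {{s,l} | s l. s \<in> S \<and> l \<in> L s}"

lemma Good_spine:
  assumes "Good V E c" "distinct (c # ys)" "\<forall>s\<in>set ys. finite (L s)"
    "V \<inter> (set ys \<union> \<Union>(L ` set ys)) = {}"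
    "\<forall>s\<in>set ys. L s \<inter> set ys = {}"
    "\<forall>s\<in>set ys. \<forall>t\<in>set ys. s \<noteq> t \<longrightarrow> L s \<inter> L t = {}"
  shows "\<exists>u. Good (V \<union> set ys \<union> \<Union>(L ` set ys)) (E \<union> path_edges (c # ys) \<union> leaf_edges (set ys) L) u"
  using assms
proof (induction ys arbitrary: c V E)
  case Nil then show ?case by (auto simp: path_edges_single leaf_edges_def)
next
  case (Cons y ys)
  have yV: "y \<notin> V" using Cons.prems(4) by auto
  have G1: "Good (insert y V) (insert {c,y} E) y" using Good_step[OF Cons.prems(1) yV] by blast
  have G2: "Good (insert y V \<union> L y) (insert {c,y} E \<union> (\<lambda>l. {y,l}) ` L y) y"
    by (rule Good_leaves) (use G1 Cons.prems in auto)
  have "\<exists>u. Good (insert y V \<union> L y \<union> set ys \<union> \<Union>(L ` set ys))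
     (insert {c,y} E \<union> (\<lambda>l. {y,l}) ` L y \<union> path_edges (y # ys) \<union> leaf_edges (set ys) L) u"
  proof (rule Cons.IH[OF G2])
    show "distinct (y # ys)" using Cons.prems by auto
    show "\<forall>s\<in>set ys. finite (L s)" using Cons.prems by auto
    show "(insert y V \<union> L y) \<inter> (set ys \<union> \<Union> (L ` set ys)) = {}"
      using Cons.prems(2,4,5,6) by auto
    show "\<forall>s\<in>set ys. L s \<inter> set ys = {}" using Cons.prems by auto
    show "\<forall>s\<in>set ys. \<forall>t\<in>set ys. s \<noteq> t \<longrightarrow> L s \<inter> L t = {}" using Cons.prems by auto
  qed
  moreover have "insert y V \<union> L y \<union> set ys \<union> \<Union>(L ` set ys) = V \<union> set (y # ys) \<union> \<Union>(L ` set (y # ys))"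
    by auto
  moreover have "insert {c,y} E \<union> (\<lambda>l. {y,l}) ` L y \<union> path_edges (y # ys) \<union> leaf_edges (set ys) L
     = E \<union> path_edges (c # y # ys) \<union> leaf_edges (set (y # ys)) L"
    unfolding path_edges_Cons2 leaf_edges_def by auto
  ultimately show ?case by metis
qed

lemma odds_union: "(\<lambda>w. w + 2 * n) ` {k::nat. odd k \<and> k < 2 * m} \<union> {k. odd k \<and> k < 2 * n}
   = {k. odd k \<and> k < 2 * (m + n)}"
proof (intro set_eqI iffI)
  fix k assume k: "k \<in> {k. odd k \<and> k < 2 * (m + n)}"
  show "k \<in> (\<lambda>w. w + 2 * n) ` {k::nat. odd k \<and> k < 2 * m} \<union> {k. odd k \<and> k < 2 * n}"
  proof (cases "k < 2 * n")
    case False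
    then have "k - 2 * n \<in> {k::nat. odd k \<and> k < 2 * m}" "k = k - 2 * n + 2 * n" using k by auto
    then show ?thesis by blast
  qed (use k in simp)
qed auto

lemma combine:
  assumes P: "Pstair C EC a b" and G: "odd_graceful V' E'" and disj: "C \<inter> V' = {}"
    and sub: "\<forall>e\<in>E'. e \<subseteq> V'" and finE': "finite E'"
  shows "odd_graceful (C \<union> V') (EC \<union> E')"
proof -
  obtain f l where inj: "inj_on f C" and rng: "\<forall>v\<in>C. f v < 2 * card EC" and cr: "cross C EC f l"
    and w: "weights f EC = {k. odd k \<and> k < 2 * card EC}" and fb: "f b = Suc l"
    and bV: "b \<in> C" and fin: "finite EC"
    using P unfolding Pstair_def by blast
  obtain g where ginj: "inj_on g V'" and grng: "g ` V' \<subseteq> {0..<2 * card E'}"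
    and gw: "weights g E' = {k. odd k \<and> k < 2 * card E'}"
    using G unfolding odd_graceful_def weights_def by blast
  define n where "n = card E'"
  define m where "m = card EC"
  have lt: "l < 2 * m" using rng bV fb unfolding m_def by force
  define h where "h v = (if v \<in> C then (if f v \<le> l then f v else f v + 2 * n) else g v + (l + 1))" for v
  have ECsub: "\<And>e. e \<in> EC \<Longrightarrow> e \<subseteq> C" using cross_sub[OF cr] .
  have "EC \<inter> E' = {}"
  proof (rule ccontr)
    assume "EC \<inter> E' \<noteq> {}"
    then obtain e where "e \<in> EC" "e \<in> E'" by blast
    moreover obtain x y where "e = {x,y}" using cr \<open>e \<in> EC\<close> unfolding cross_def by blast
    ultimately show False using ECsub sub disj by blast
  qed
  then have cardU: "card (EC \<union> E') = m + n" unfolding m_def n_def using fin finE' card_Un_disjoint by blast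
  have "inj_on h (C \<union> V')"
  proof (rule inj_onI)
    fix u v assume uv: "u \<in> C \<union> V'" "v \<in> C \<union> V'" "h u = h v"
    have gr: "\<And>v. v \<in> V' \<Longrightarrow> g v < 2 * n" using grng unfolding n_def by auto
    show "u = v"
    proof (cases "u \<in> C"; cases "v \<in> C")
      assume "u \<in> C" "v \<in> C"
      then show ?thesis using uv inj unfolding h_def inj_on_def by (auto split: if_splits)
    next
      assume "u \<notin> C" "v \<notin> C"
      then show ?thesis using uv ginj unfolding h_def inj_on_def by auto
    next
      assume "u \<in> C" "v \<notin> C"
      then show ?thesis using uv gr[of v] unfolding h_def by (auto split: if_splits)
    next
      assume "u \<notin> C" "v \<in> C"
      then show ?thesis using uv gr[of u] unfolding h_def by (auto split: if_splits)
    qed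
  qed
  moreover have "h ` (C \<union> V') \<subseteq> {0..<2 * card (EC \<union> E')}"
    using rng grng lt unfolding cardU h_def m_def n_def by (auto split: if_splits)
  moreover have "weights h (EC \<union> E') = {k. odd k \<and> k < 2 * card (EC \<union> E')}"
  proof -
    have "weights h EC = weights (\<lambda>v. if f v \<le> l then f v else f v + 2 * n) EC"
      by (rule weights_cong[OF ECsub]) (auto simp: h_def)
    also have "\<dots> = (\<lambda>w. w + 2 * n) ` weights f EC"
      by (rule weights_shift[OF cr]) auto
    finally have 1: "weights h EC = (\<lambda>w. w + 2 * n) ` {k. odd k \<and> k < 2 * m}" using w m_def by simp
    have "weights h E' = weights (\<lambda>v. g v + (l + 1)) E'"
      by (rule weights_cong[of E' V']) (use sub disj in \<open>auto simp: h_def\<close>)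
    then have 2: "weights h E' = {k. odd k \<and> k < 2 * n}" using gw weights_plus n_def by metis
    show ?thesis unfolding weights_union 1 2 cardU odds_union ..
  qed
  ultimately show ?thesis unfolding odd_graceful_def weights_def by blast
qed



lemma reach_refl: "reachable E x x" unfolding reachable_def by simp

lemma reach_trans: "reachable E x y \<Longrightarrow> reachable E y z \<Longrightarrow> reachable E x z"
  unfolding reachable_def by (rule rtrancl_trans)

lemma reach_step: "reachable E x y \<Longrightarrow> adj E y z \<Longrightarrow> reachable E x z"
  unfolding reachable_def by (simp add: rtrancl_into_rtrancl)

lemma adj_sym: "adj E x y \<Longrightarrow> adj E y x" unfolding adj_def by (simp add: insert_commute)

lemma reach_sym: "reachable E x y \<Longrightarrow> reachable E y x"
  unfolding reachable_def
proof (induction rule: rtrancl_induct)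
  case base then show ?case by simp
next
  case (step y z)
  then have "(z, y) \<in> {(u, v). adj E u v}" using adj_sym by auto
  then show ?case using step.IH by (rule converse_rtrancl_into_rtrancl)
qed

lemma reach_closed:
  assumes "reachable E x w" "x \<in> A" "\<And>y z. y \<in> A \<Longrightarrow> adj E y z \<Longrightarrow> z \<in> A"
  shows "w \<in> A"
  using assms(1) unfolding reachable_def
proof (induction rule: rtrancl_induct)
  case base then show ?case using assms(2) .
next
  case (step y z) then show ?case using assms(3) by auto
qed

lemma card2_pair: "card e = 2 \<Longrightarrow> \<exists>x y. e = {x,y} \<and> x \<noteq> y"
  by (metis card_2_iff)

lemma comp_edge:
  assumes "simple_graph V E" "{x,y} \<in> E" "x \<in> component V E v"
  shows "y \<in> component V E v"
  using assms unfolding component_def simple_graph_def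
  by (auto intro: reach_step simp: adj_def)

lemma reach_restrict:
  assumes sg: "simple_graph V E" and uV: "u \<in> V" and uC: "u \<notin> component V E v"
    and r: "reachable E u w"
  shows "reachable {e\<in>E. \<not> e \<subseteq> component V E v} u w \<and> w \<notin> component V E v"
  using r unfolding reachable_def
proof (induction rule: rtrancl_induct)
  case base then show ?case using uC by simp
next
  case (step y z)
  have yz: "{y,z} \<in> E" using step.hyps(2) by (simp add: adj_def)
  have zC: "z \<notin> component V E v"
  proof
    assume "z \<in> component V E v"
    then have "y \<in> component V E v" using comp_edge[OF sg, of z y] yz by (simp add: insert_commute)
    with step.IH show False by simp
  qed
  then have "{y,z} \<in> {e\<in>E. \<not> e \<subseteq> component V E v}" using yz by auto
  then show ?case using step.IH zC by (auto simp: adj_def intro: rtrancl_into_rtrancl)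
qed

lemma reach_mono: "E' \<subseteq> E \<Longrightarrow> reachable E' u w \<Longrightarrow> reachable E u w"
  unfolding reachable_def adj_def
  by (erule rtrancl_mono[THEN subsetD, rotated]) auto

lemma forest_comp_induct:
  "finite V \<Longrightarrow> simple_graph V E \<Longrightarrow>
   (\<forall>v\<in>V. \<exists>a b. Pstair (component V E v) (induced_edges E (component V E v)) a b) \<Longrightarrow> odd_graceful V E"
proof (induction "card V" arbitrary: V E rule: less_induct)
  case (less V E)
  show ?case
  proof (cases "V = {}")
    case True
    then have "E = {}" using less.prems(2) unfolding simple_graph_def by fastforce
    then show ?thesis using True unfolding odd_graceful_def by auto
  next
    case False
    then obtain v where vV: "v \<in> V" by blast
    define C where "C = component V E v"
    define V' where "V' = V - C"
    define E' where "E' = {e\<in>E. \<not> e \<subseteq> C}"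
    have sg: "simple_graph V E" using less.prems by simp
    have vC: "v \<in> C" unfolding C_def component_def using vV reach_refl by auto
    have CV: "C \<subseteq> V" unfolding C_def component_def by auto
    have E'V': "\<forall>e\<in>E'. e \<subseteq> V'"
    proof
      fix e assume e: "e \<in> E'"
      then obtain x y where xy: "e = {x,y}" "x \<noteq> y" using sg card2_pair unfolding E'_def simple_graph_def by blast
      have "x \<notin> C" using comp_edge[OF sg, of x y v] e xy unfolding E'_def C_def by auto
      moreover have "y \<notin> C" using comp_edge[OF sg, of y x v] e xy unfolding E'_def C_def by (auto simp: insert_commute)
      ultimately show "e \<subseteq> V'" using e sg xy unfolding V'_def E'_def simple_graph_def by auto
    qed
    have sg': "simple_graph V' E'" using E'V' sg less.prems(1) unfolding simple_graph_def V'_def E'_def by auto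
    have compeq: "component V' E' u = component V E u" if uV': "u \<in> V'" for u
    proof -
      have uV: "u \<in> V" "u \<notin> component V E v" using uV' unfolding V'_def C_def by auto
      show ?thesis unfolding component_def V'_def
        using reach_restrict[OF sg uV] reach_mono[of E' E u] unfolding E'_def C_def by blast
    qed
    have indeq: "induced_edges E' (component V E u) = induced_edges E (component V E u)" if uV': "u \<in> V'" for u
    proof -
      have "component V E u \<inter> C = {}" using compeq[OF uV'] unfolding component_def V'_def by auto
      moreover have "\<forall>e\<in>E. e \<noteq> {}" using sg unfolding simple_graph_def by fastforce
      ultimately have "\<And>e. e \<in> E \<Longrightarrow> e \<subseteq> component V E u \<Longrightarrow> \<not> e \<subseteq> C" by blast
      then show ?thesis unfolding induced_edges_def E'_def by (intro Collect_cong) blast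
    qed
    have G': "odd_graceful V' E'"
    proof (rule less.hyps)
      show "card V' < card V" unfolding V'_def using vC CV less.prems(1)
        by (intro psubset_card_mono) auto
      show "finite V'" using less.prems(1) unfolding V'_def by simp
      show "simple_graph V' E'" by (rule sg')
      show "\<forall>u\<in>V'. \<exists>a b. Pstair (component V' E' u) (induced_edges E' (component V' E' u)) a b"
        using less.prems(3) compeq indeq unfolding V'_def by auto
    qed
    obtain a b where P: "Pstair C (induced_edges E C) a b" using less.prems(3) vV unfolding C_def by blast
    have finE: "finite E" using sg unfolding simple_graph_def
      by (meson Pow_iff finite_Pow_iff rev_finite_subset subsetI)
    have "odd_graceful (C \<union> V') (induced_edges E C \<union> E')"
      by (rule combine[OF P G']) (use E'V' finE in \<open>auto simp: V'_def E'_def\<close>)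
    moreover have "C \<union> V' = V" using CV unfolding V'_def by auto
    moreover have "induced_edges E C \<union> E' = E" unfolding induced_edges_def E'_def by auto
    ultimately show ?thesis by simp
  qed
qed



lemma leaf_edge:
  assumes "degree E l = 1"
  obtains e where "{e\<in>E. l \<in> e} = {e}"
  using assms unfolding degree_def by (metis card_1_singletonE)

lemma leaf_edges_insert: "leaf_edges (insert s A) L = (\<lambda>l. {s,l}) ` L s \<union> leaf_edges A L"
proof (rule set_eqI, rule iffI)
  fix e assume "e \<in> leaf_edges (insert s A) L"
  then obtain s' l where h: "e = {s',l}" "s' \<in> insert s A" "l \<in> L s'" unfolding leaf_edges_def by blast
  show "e \<in> (\<lambda>l. {s,l}) ` L s \<union> leaf_edges A L"
  proof (cases "s' = s")
    case True then show ?thesis using h by blast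
  next
    case False then have "s' \<in> A" using h by blast
    then show ?thesis using h unfolding leaf_edges_def by blast
  qed
next
  fix e assume "e \<in> (\<lambda>l. {s,l}) ` L s \<union> leaf_edges A L"
  then show "e \<in> leaf_edges (insert s A) L" unfolding leaf_edges_def by blast
qed

lemma uniq_edge:
  assumes "{e\<in>E. l \<in> e} = {e0}" "e \<in> E" "l \<in> e"
  shows "e = e0"
proof -
  have "e \<in> {e\<in>E. l \<in> e}" using assms(2,3) by simp
  then have "e \<in> {e0}" unfolding assms(1) .
  then show ?thesis by simp
qed

lemma cat_Pstair:
  assumes cat: "caterpillar V E" and ne: "E \<noteq> {}"
  shows "\<exists>a b. Pstair V E a b"
proof -
  have tr: "tree V E" using cat unfolding caterpillar_def by simp
  have sg: "simple_graph V E" and con: "connected_graph V E"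
    using tr unfolding tree_def forest_def by auto
  have finV: "finite V" using sg unfolding simple_graph_def by simp
  define S where "S = {v\<in>V. degree E v \<noteq> 1}"
  define ES where "ES = {e\<in>E. e \<subseteq> S}"
  have "path_graph S ES" using cat unfolding caterpillar_def remove_leaves_def S_def ES_def Let_def by simp
  then obtain xs where xs: "distinct xs" "set xs = S" "ES = path_edges xs"
    unfolding path_graph_def path_edges_alt by blast
  have edge: "\<And>e. e \<in> E \<Longrightarrow> \<exists>x y. e = {x,y} \<and> x \<noteq> y \<and> x \<in> V \<and> y \<in> V"
  proof -
    fix e assume "e \<in> E"
    then have "e \<subseteq> V" "card e = 2" using sg unfolding simple_graph_def by auto
    then obtain x y where "e = {x,y}" "x \<noteq> y" using card2_pair by blast
    then show "\<exists>x y. e = {x,y} \<and> x \<noteq> y \<and> x \<in> V \<and> y \<in> V" using \<open>e \<subseteq> V\<close> by blast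
  qed
  have leafu: "\<And>l e e'. l \<in> V - S \<Longrightarrow> e \<in> E \<Longrightarrow> e' \<in> E \<Longrightarrow> l \<in> e \<Longrightarrow> l \<in> e' \<Longrightarrow> e = e'"
  proof -
    fix l e e' assume "l \<in> V - S" "e \<in> E" "e' \<in> E" "l \<in> e" "l \<in> e'"
    moreover obtain e0 where "{e\<in>E. l \<in> e} = {e0}" using leaf_edge[of E l] \<open>l \<in> V - S\<close> unfolding S_def by blast
    ultimately show "e = e'" using uniq_edge[of E l e0] by metis
  qed
  have leafex: "\<And>l. l \<in> V - S \<Longrightarrow> \<exists>w. {l,w} \<in> E \<and> w \<noteq> l \<and> w \<in> V"
  proof -
    fix l assume l: "l \<in> V - S"
    then obtain e0 where e0: "{e\<in>E. l \<in> e} = {e0}" using leaf_edge[of E l] unfolding S_def by blast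
    have "e0 \<in> {e\<in>E. l \<in> e}" unfolding e0 by simp
    then have "e0 \<in> E" "l \<in> e0" by auto
    then obtain x y where "e0 = {x,y}" "x \<noteq> y" "x \<in> V" "y \<in> V" using edge by blast
    then show "\<exists>w. {l,w} \<in> E \<and> w \<noteq> l \<and> w \<in> V"
    proof (cases "l = x")
      case True then show ?thesis using \<open>e0 = {x,y}\<close> \<open>e0 \<in> E\<close> \<open>x \<noteq> y\<close> \<open>y \<in> V\<close>
        by (intro exI[of _ y]) simp
    next
      case False then have "l = y" using \<open>e0 = {x,y}\<close> \<open>l \<in> e0\<close> by simp
      then show ?thesis using \<open>e0 = {x,y}\<close> \<open>e0 \<in> E\<close> \<open>x \<noteq> y\<close> \<open>x \<in> V\<close>
        by (intro exI[of _ x]) (simp add: insert_commute)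
    qed
  qed
  have twoleaves: "V = {a,b}" if ab: "a \<in> V - S" "b \<in> V - S" "{a,b} \<in> E" for a b
  proof -
    have closed: "z \<in> {a,b}" if "y \<in> {a,b}" "adj E y z" for y z
    proof -
      have "{y,z} \<in> E" using that(2) by (simp add: adj_def)
      moreover have "y \<in> V - S" using that(1) ab by blast
      moreover have "y \<in> {y,z}" "y \<in> {a,b}" using that(1) by auto
      ultimately have "{y,z} = {a,b}" using leafu[of y "{y,z}" "{a,b}"] ab(3) by blast
      then show ?thesis by (simp add: doubleton_eq_iff) blast
    qed
    have "a \<in> V" using ab by auto
    have "w \<in> {a,b}" if "w \<in> V" for w
      using reach_closed[of E a w "{a,b}"] con \<open>a \<in> V\<close> that closed unfolding connected_graph_def by blast
    then show ?thesis using ab by auto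
  qed
  show ?thesis
  proof (cases "S = {}")
    case True
    obtain e where "e \<in> E" using ne by blast
    then obtain a b where ab: "e = {a,b}" "a \<noteq> b" "a \<in> V" "b \<in> V" using edge by blast
    have V: "V = {a,b}" using twoleaves[of a b] ab \<open>e \<in> E\<close> True by auto
    have E: "E = {{a,b}}"
    proof
      show "E \<subseteq> {{a,b}}"
      proof
        fix e' assume "e' \<in> E"
        then obtain x y where "e' = {x,y}" "x \<noteq> y" "x \<in> V" "y \<in> V" using edge by blast
        then show "e' \<in> {{a,b}}" using V by auto
      qed
    qed (use ab \<open>e \<in> E\<close> in auto)
    have "Good {a} {} a" unfolding Good_def by simp
    then have "Good (insert b {a}) (insert {a,b} {}) a" using Good_step[of "{a}" "{}" a b] ab by blast
    then have "Good V E a" using V E by (simp add: insert_commute)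
    then show ?thesis using ne unfolding Good_def by blast
  next
    case False
    then obtain s0 ys where xs0: "xs = s0 # ys" using xs(2) by (cases xs) auto
    define L where "L s = {l \<in> V - S. {s,l} \<in> E}" for s
    have nbS: "\<exists>w\<in>S. l \<in> L w" if l: "l \<in> V - S" for l
    proof -
      obtain w where w: "{l,w} \<in> E" "w \<noteq> l" "w \<in> V" using leafex l by blast
      have "w \<in> S"
      proof (rule ccontr)
        assume "w \<notin> S"
        then have "V = {l,w}" using twoleaves[of l w] w l by auto
        then have "S = {}" using l \<open>w \<notin> S\<close> unfolding S_def by auto
        with False show False by simp
      qed
      then show ?thesis using w l unfolding L_def by (auto simp: insert_commute)
    qed
    have LS: "L s \<inter> S = {}" for s unfolding L_def by auto
    have LV: "L s \<subseteq> V" for s unfolding L_def by auto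
    have Ldisj: "L s \<inter> L t = {}" if "s \<in> S" "t \<in> S" "s \<noteq> t" for s t
    proof (rule ccontr)
      assume "L s \<inter> L t \<noteq> {}"
      then obtain l where l: "l \<in> L s" "l \<in> L t" by blast
      then have "{s,l} = {t,l}" using leafu[of l "{s,l}" "{t,l}"] unfolding L_def by auto
      then show False using that l LS by (auto simp: doubleton_eq_iff)
    qed
    have Vall: "V = S \<union> \<Union>(L ` S)" using nbS LV unfolding S_def by blast
    have Eall: "E = ES \<union> leaf_edges S L"
    proof
      show "E \<subseteq> ES \<union> leaf_edges S L"
      proof
        fix e assume e: "e \<in> E"
        then obtain x y where xy: "e = {x,y}" "x \<noteq> y" "x \<in> V" "y \<in> V" using edge by blast
        show "e \<in> ES \<union> leaf_edges S L"
        proof (cases "e \<subseteq> S")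
          case True then show ?thesis using e unfolding ES_def by auto
        next
          case nS: False
          then obtain l w where lw: "e = {w,l}" "l \<in> V - S" "w \<in> V" using xy by (auto simp: insert_commute)
          obtain w' where w': "w' \<in> S" "l \<in> L w'" using nbS lw by blast
          then have "{w',l} = e" using leafu[of l "{w',l}" e] e lw unfolding L_def by auto
          then show ?thesis using w' unfolding leaf_edges_def by blast
        qed
      qed
      show "ES \<union> leaf_edges S L \<subseteq> E" unfolding ES_def leaf_edges_def L_def by auto
    qed
    have G0: "Good {s0} {} s0" unfolding Good_def by simp
    have G1: "Good ({s0} \<union> L s0) ({} \<union> (\<lambda>l. {s0,l}) ` L s0) s0"
      by (rule Good_leaves[OF _ G0]) (use finV LV LS xs xs0 in \<open>auto intro: rev_finite_subset\<close>)
    have s0S: "s0 \<in> S" using xs xs0 by auto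
    have ysS: "set ys \<subseteq> S" using xs xs0 by auto
    have s0ys: "s0 \<notin> set ys" using xs xs0 by auto
    obtain u where "Good ({s0} \<union> L s0 \<union> set ys \<union> \<Union>(L ` set ys))
        ({} \<union> (\<lambda>l. {s0,l}) ` L s0 \<union> path_edges (s0 # ys) \<union> leaf_edges (set ys) L) u"
    proof (atomize_elim, rule Good_spine[OF G1])
      show "distinct (s0 # ys)" using xs xs0 by simp
      show "\<forall>s\<in>set ys. finite (L s)" using finV LV by (meson rev_finite_subset)
      show "({s0} \<union> L s0) \<inter> (set ys \<union> \<Union> (L ` set ys)) = {}"
        using s0ys ysS s0S LS Ldisj by fastforce
      show "\<forall>s\<in>set ys. L s \<inter> set ys = {}" using LS ysS by blast
      show "\<forall>s\<in>set ys. \<forall>t\<in>set ys. s \<noteq> t \<longrightarrow> L s \<inter> L t = {}" using Ldisj ysS by blast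
    qed
    moreover have "{s0} \<union> L s0 \<union> set ys \<union> \<Union>(L ` set ys) = V"
      using Vall xs xs0 by auto
    moreover have "{} \<union> (\<lambda>l. {s0,l}) ` L s0 \<union> path_edges (s0 # ys) \<union> leaf_edges (set ys) L = E"
      using Eall xs xs0 unfolding leaf_edges_def by auto
    ultimately have "Good V E u" by simp
    then show ?thesis using ne unfolding Good_def by blast
  qed
qed


theorem theorem2:
  fixes V :: "'a set" and E :: "'a set set"
  assumes "forest V E"
    and "\<forall>v\<in>V. caterpillar (component V E v) (induced_edges E (component V E v))
                \<and> induced_edges E (component V E v) \<noteq> {}"
  shows "odd_graceful V E"
proof (rule forest_comp_induct)
  show "simple_graph V E" using assms(1) unfolding forest_def by simp
  then show "finite V" unfolding simple_graph_def by simp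
  show "\<forall>v\<in>V. \<exists>a b. Pstair (component V E v) (induced_edges E (component V E v)) a b"
    using assms(2) cat_Pstair by blast
qed

end
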